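(* Let $n\ge 4$ be even and consider the $[\![n,n-2,2]\!]$ code. Let $G = \tfrac{i}{\sqrt2}(X+Y)$. Let $V = G^{\otimes n}$ if $n \equiv 0 \pmod 4$ and $V = Z_n G^{\otimes n}$ if $n\equiv 2 \pmod 4$. Then $V$ preserves the code space, and, up to a logical Pauli operator and a global phase, acts on the code space as the product of logical $\mathrm{CZ}$ gates between every pair of distinct encoded qubits, $\prod_{1\le i<j\le n-2}\overline{\mathrm{CZ}}_{i,j}$.
   Context: For even $n$, the $[\![n,n-2,2]\!]$ code is the stabilizer code on $n$ qubits with stabilizer generators $X^{\otimes n}$ and $Z^{\otimes n}$, with logical operators $\bar X_j = X_1X_{j+1}$ and $\bar Z_j = Z_{j+1}Z_n$ for $j=1,\dots,n-2$. $\mathrm{CZ} = \mathbb 1 - 2|11\rangle\langle11|$. *)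

theory Defs
  imports Complex_Main
begin

text \<open>Computational basis states of n qubits are
  bit lists of length n (entry k is qubit k+1 of the paper, i.e. qubits are
  numbered 0..n-1 here). A state is a function from bit lists to amplitudes
  (required to vanish off length-n lists); an operator is a matrix indexed by
  bit lists.\<close>

type_synonym gate1 = "bool \<Rightarrow> bool \<Rightarrow> complex"
type_synonym qop = "bool list \<Rightarrow> bool list \<Rightarrow> complex"
type_synonym qstate = "bool list \<Rightarrow> complex"

definition bits :: "nat \<Rightarrow> bool list set" where
  "bits n = {xs. length xs = n}"

text \<open>Single-qubit Paulis, matrix entries indexed (row, column), False = 0, True = 1.\<close>
definition pI :: gate1 where "pI a b = (if a = b then 1 else 0)"
definition pX :: gate1 where "pX a b = (if a \<noteq> b then 1 else 0)"
definition pY :: gate1 where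
  "pY a b = (if a = b then 0 else if a then \<i> else - \<i>)"
definition pZ :: gate1 where "pZ a b = (if a = b then (if a then -1 else 1) else 0)"

definition gateG :: gate1 where
  "gateG a b = (\<i> / complex_of_real (sqrt 2)) * (pX a b + pY a b)"

definition tensor :: "nat \<Rightarrow> (nat \<Rightarrow> gate1) \<Rightarrow> qop" where
  "tensor n g = (\<lambda>xs ys. \<Prod>k<n. g k (xs ! k) (ys ! k))"

definition on_qubit :: "nat \<Rightarrow> nat \<Rightarrow> gate1 \<Rightarrow> qop" where
  "on_qubit n k g = tensor n (\<lambda>l. if l = k then g else pI)"

definition ident :: "nat \<Rightarrow> qop" where
  "ident n = tensor n (\<lambda>_. pI)"

definition mmul :: "nat \<Rightarrow> qop \<Rightarrow> qop \<Rightarrow> qop" where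
  "mmul n A B = (\<lambda>xs zs. \<Sum>ys\<in>bits n. A xs ys * B ys zs)"

definition madd :: "qop \<Rightarrow> qop \<Rightarrow> qop" where
  "madd A B = (\<lambda>xs ys. A xs ys + B xs ys)"

definition mscale :: "complex \<Rightarrow> qop \<Rightarrow> qop" where
  "mscale c A = (\<lambda>xs ys. c * A xs ys)"

definition app :: "nat \<Rightarrow> qop \<Rightarrow> qstate \<Rightarrow> qstate" where
  "app n A \<psi> = (\<lambda>xs. if length xs = n then \<Sum>ys\<in>bits n. A xs ys * \<psi> ys else 0)"

text \<open>Product of a list of operators (in list order, leftmost applied last).\<close>
definition mprod_list :: "nat \<Rightarrow> qop list \<Rightarrow> qop" where
  "mprod_list n As = foldr (mmul n) As (ident n)"

definition code_space :: "nat \<Rightarrow> qstate set" where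
  "code_space n = {\<psi>. (\<forall>xs. length xs \<noteq> n \<longrightarrow> \<psi> xs = 0)
      \<and> app n (tensor n (\<lambda>_. pX)) \<psi> = \<psi> \<and> app n (tensor n (\<lambda>_. pZ)) \<psi> = \<psi>}"

text \<open>Logical operators, j = 1..n-2: Xbar_j = X_1 X_{j+1}, Zbar_j = Z_{j+1} Z_n
  (paper's 1-based qubits 1, j+1, n are indices 0, j, n-1 here).\<close>
definition logX :: "nat \<Rightarrow> nat \<Rightarrow> qop" where
  "logX n j = tensor n (\<lambda>k. if k = 0 \<or> k = j then pX else pI)"
definition logZ :: "nat \<Rightarrow> nat \<Rightarrow> qop" where
  "logZ n j = tensor n (\<lambda>k. if k = j \<or> k = n - 1 then pZ else pI)"

text \<open>Logical Pauli operators: the group generated by the Xbar_j, Zbar_j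
  (global phases are accounted for separately).\<close>
inductive_set logical_paulis :: "nat \<Rightarrow> qop set" for n where
  lp_id: "ident n \<in> logical_paulis n"
| lp_X: "\<lbrakk>P \<in> logical_paulis n; 1 \<le> j; j \<le> n - 2\<rbrakk> \<Longrightarrow> mmul n (logX n j) P \<in> logical_paulis n"
| lp_Z: "\<lbrakk>P \<in> logical_paulis n; 1 \<le> j; j \<le> n - 2\<rbrakk> \<Longrightarrow> mmul n (logZ n j) P \<in> logical_paulis n"

text \<open>Logical CZ between encoded qubits i and j: CZ = 1 - 2|11><11|, where the
  logical projector onto |1> of encoded qubit j is (1 - Zbar_j)/2.\<close>
definition logProj1 :: "nat \<Rightarrow> nat \<Rightarrow> qop" where
  "logProj1 n j = mscale (1/2) (madd (ident n) (mscale (-1) (logZ n j)))"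

definition logCZ :: "nat \<Rightarrow> nat \<Rightarrow> nat \<Rightarrow> qop" where
  "logCZ n i j = madd (ident n) (mscale (-2) (mmul n (logProj1 n i) (logProj1 n j)))"

text \<open>Product of logical CZ over all pairs 1 \<le> i < j \<le> n-2 (these commute).\<close>
definition allLogCZ :: "nat \<Rightarrow> qop" where
  "allLogCZ n = mprod_list n [logCZ n i j. i \<leftarrow> [1..<n-1], j \<leftarrow> [Suc i..<n-1]]"

definition opV :: "nat \<Rightarrow> qop" where
  "opV n = (if n mod 4 = 0 then tensor n (\<lambda>_. gateG)
            else mmul n (on_qubit n (n - 1) pZ) (tensor n (\<lambda>_. gateG)))"

end

theory Submission
  imports Defs
begin

lemma finite_bits[simp]: "finite (bits n)"
  unfolding bits_def by (rule finite_list_length)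

lemma bits_iff[simp]: "xs \<in> bits n \<longleftrightarrow> length xs = n"
  by (simp add: bits_def)

definition isdiag :: "nat \<Rightarrow> qop \<Rightarrow> bool" where
  "isdiag n A \<longleftrightarrow> (\<forall>xs ys. length xs = n \<longrightarrow> length ys = n \<longrightarrow> xs \<noteq> ys \<longrightarrow> A xs ys = 0)"

lemma app_diag:
  assumes "isdiag n A" "length xs = n"
  shows "app n A \<phi> xs = A xs xs * \<phi> xs"
proof -
  have "app n A \<phi> xs = (\<Sum>ys\<in>bits n. A xs ys * \<phi> ys)" using assms(2) by (simp add: app_def)
  also have "\<dots> = (\<Sum>ys\<in>bits n. if ys = xs then A xs xs * \<phi> xs else 0)"
    by (rule sum.cong) (use assms in \<open>auto simp: isdiag_def\<close>)
  also have "\<dots> = A xs xs * \<phi> xs" using assms(2) by (simp add: sum.delta)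
  finally show ?thesis .
qed

lemma mmul_diag_entry:
  assumes "isdiag n A" "length xs = n"
  shows "mmul n A B xs zs = A xs xs * B xs zs"
proof -
  have "mmul n A B xs zs = (\<Sum>ys\<in>bits n. A xs ys * B ys zs)" by (simp add: mmul_def)
  also have "\<dots> = (\<Sum>ys\<in>bits n. if ys = xs then A xs xs * B xs zs else 0)"
    by (rule sum.cong) (use assms in \<open>auto simp: isdiag_def\<close>)
  also have "\<dots> = A xs xs * B xs zs" using assms(2) by (simp add: sum.delta)
  finally show ?thesis .
qed

lemma mmul_isdiag: "isdiag n A \<Longrightarrow> isdiag n B \<Longrightarrow> isdiag n (mmul n A B)"
  unfolding isdiag_def[of n "mmul n A B"] by (auto simp: mmul_diag_entry isdiag_def)

lemma madd_isdiag: "isdiag n A \<Longrightarrow> isdiag n B \<Longrightarrow> isdiag n (madd A B)"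
  by (auto simp: isdiag_def madd_def)

lemma mscale_isdiag: "isdiag n A \<Longrightarrow> isdiag n (mscale c A)"
  by (auto simp: isdiag_def mscale_def)

lemma tensor_isdiag:
  assumes "\<And>k a b. k < n \<Longrightarrow> a \<noteq> b \<Longrightarrow> g k a b = 0"
  shows "isdiag n (tensor n g)"
  unfolding isdiag_def tensor_def
proof (intro allI impI)
  fix xs ys :: "bool list"
  assume h: "length xs = n" "length ys = n" "xs \<noteq> ys"
  have "\<exists>k<n. xs ! k \<noteq> ys ! k"
  proof (rule ccontr)
    assume "\<not> (\<exists>k<n. xs ! k \<noteq> ys ! k)"
    then have "xs = ys" using h by (intro nth_equalityI) auto
    then show False using h by simp
  qed
  then obtain k where "k < n" "xs ! k \<noteq> ys ! k" by blast
  then show "(\<Prod>k<n. g k (xs ! k) (ys ! k)) = 0"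
    by (intro prod_zero) (auto intro!: bexI[of _ k] assms)
qed

lemma ident_isdiag: "isdiag n (ident n)"
  unfolding ident_def by (rule tensor_isdiag) (simp add: pI_def)

lemma ident_diag: "ident n xs xs = 1"
  by (simp add: ident_def tensor_def pI_def)

lemma mprod_list_diag:
  assumes "\<forall>A\<in>set As. isdiag n A"
  shows "isdiag n (mprod_list n As) \<and> (\<forall>xs. length xs = n \<longrightarrow> mprod_list n As xs xs = prod_list (map (\<lambda>A. A xs xs) As))"
  using assms
proof (induction As)
  case Nil
  then show ?case by (simp add: mprod_list_def ident_isdiag ident_diag)
next
  case (Cons A As)
  have e: "mprod_list n (A # As) = mmul n A (mprod_list n As)" by (simp add: mprod_list_def)
  have dA: "isdiag n A" and IH: "isdiag n (mprod_list n As)"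
    "\<forall>xs. length xs = n \<longrightarrow> mprod_list n As xs xs = prod_list (map (\<lambda>A. A xs xs) As)"
    using Cons by auto
  have 1: "isdiag n (mmul n A (mprod_list n As))" by (rule mmul_isdiag[OF dA IH(1)])
  have 2: "\<forall>xs. length xs = n \<longrightarrow> mmul n A (mprod_list n As) xs xs = A xs xs * prod_list (map (\<lambda>A. A xs xs) As)"
    using mmul_diag_entry[OF dA] IH(2) by simp
  show ?case unfolding e using 1 2 by simp
qed

lemma prod_list_concat: "prod_list (concat xss) = prod_list (map prod_list xss)"
  by (induction xss) auto

lemma prod_list_upt: "prod_list (map f [a..<b]) = (\<Prod>i\<in>{a..<b}. f i)"
  using prod.distinct_set_conv_list[of "[a..<b]" f] by simp

lemma prod_if_pow: "finite A \<Longrightarrow> (\<Prod>k\<in>A. if P k then c else 1) = c ^ card {k\<in>A. P k}"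
proof -
  assume f: "finite A"
  have e: "A \<inter> {k. P k} = {k\<in>A. P k}" by auto
  show ?thesis using f by (simp add: prod.If_cases e)
qed


definition sg :: "bool \<Rightarrow> complex" where "sg b = (if b then -1 else 1)"

lemma pZ_simps[simp]: "pZ a a = sg a" "a \<noteq> b \<Longrightarrow> pZ a b = 0"
  by (auto simp: pZ_def sg_def)
lemma pI_simps[simp]: "pI a a = 1" "a \<noteq> b \<Longrightarrow> pI a b = 0"
  by (auto simp: pI_def)

lemma app_tensor_flip:
  assumes "\<And>a. g a a = 0" "length xs = n"
  shows "app n (tensor n (\<lambda>_. g)) \<psi> xs = (\<Prod>k<n. g (xs!k) (\<not> xs!k)) * \<psi> (map Not xs)"
proof -
  have "app n (tensor n (\<lambda>_. g)) \<psi> xs = (\<Sum>ys\<in>bits n. tensor n (\<lambda>_. g) xs ys * \<psi> ys)"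
    using assms(2) by (simp add: app_def)
  also have "\<dots> = (\<Sum>ys\<in>bits n. if ys = map Not xs then (\<Prod>k<n. g (xs!k) (\<not> xs!k)) * \<psi> (map Not xs) else 0)"
  proof (rule sum.cong[OF refl])
    fix ys assume ys: "ys \<in> bits n"
    show "tensor n (\<lambda>_. g) xs ys * \<psi> ys = (if ys = map Not xs then (\<Prod>k<n. g (xs!k) (\<not> xs!k)) * \<psi> (map Not xs) else 0)"
    proof (cases "ys = map Not xs")
      case True
      then show ?thesis using assms(2) by (simp add: tensor_def)
    next
      case False
      have "\<exists>k<n. ys ! k \<noteq> (\<not> xs ! k)"
      proof (rule ccontr)
        assume "\<not> (\<exists>k<n. ys ! k \<noteq> (\<not> xs ! k))"
        then have "ys = map Not xs" using ys assms(2) by (intro nth_equalityI) auto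
        then show False using False by simp
      qed
      then obtain k where k: "k < n" "ys ! k = xs ! k" by blast
      have "tensor n (\<lambda>_. g) xs ys = 0" unfolding tensor_def
      proof (rule prod_zero)
        show "\<exists>a\<in>{..<n}. g (xs ! a) (ys ! a) = 0"
          using k assms(1) by (intro bexI[of _ k]) auto
      qed simp
      then show ?thesis using False by simp
    qed
  qed
  also have "\<dots> = (\<Prod>k<n. g (xs!k) (\<not> xs!k)) * \<psi> (map Not xs)"
    using assms(2) by (simp add: sum.delta)
  finally show ?thesis .
qed

lemma tensor_diag_val: "tensor n g xs xs = (\<Prod>k<n. g k (xs!k) (xs!k))"
  by (simp add: tensor_def)

lemma logZ_isdiag: "isdiag n (logZ n j)"
  unfolding logZ_def by (rule tensor_isdiag) auto

lemma logZ_diag: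
  assumes "j < n - 1" "length xs = n"
  shows "logZ n j xs xs = sg (xs!j) * sg (xs!(n-1))"
proof -
  have "logZ n j xs xs = (\<Prod>k<n. (if k = j then sg (xs!j) else 1) * (if k = n - 1 then sg (xs!(n-1)) else 1))"
    unfolding logZ_def tensor_diag_val
    by (rule prod.cong[OF refl]) (use assms in auto)
  also have "\<dots> = sg (xs!j) * sg (xs!(n-1))"
  proof -
    have "j < n" "n - 1 < n" using assms by auto
    then show ?thesis by (simp add: prod.distrib prod.delta)
  qed
  finally show ?thesis .
qed

lemma onq_isdiag: "isdiag n (on_qubit n k pZ)"
  unfolding on_qubit_def by (rule tensor_isdiag) auto

lemma onq_diag:
  assumes "k < n"
  shows "on_qubit n k pZ xs xs = sg (xs!k)"
proof -
  have "on_qubit n k pZ xs xs = (\<Prod>l<n. (if l = k then sg (xs!k) else 1))"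
    unfolding on_qubit_def tensor_diag_val
    by (rule prod.cong[OF refl]) auto
  also have "\<dots> = sg (xs!k)" using assms by (simp add: prod.delta)
  finally show ?thesis .
qed

lemma tensorZ_isdiag: "isdiag n (tensor n (\<lambda>_. pZ))"
  by (rule tensor_isdiag) auto

definition wt :: "nat \<Rightarrow> bool list \<Rightarrow> nat" where "wt n xs = card {k\<in>{..<n}. xs!k}"

lemma tensorZ_diag: "tensor n (\<lambda>_. pZ) xs xs = (-1) ^ wt n xs"
proof -
  have "tensor n (\<lambda>_. pZ) xs xs = (\<Prod>k\<in>{..<n}. if xs!k then -1 else 1)"
    unfolding tensor_diag_val by (simp add: sg_def)
  also have "\<dots> = (-1) ^ wt n xs" unfolding wt_def by (rule prod_if_pow) simp
  finally show ?thesis .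
qed

definition om :: complex where "om = (1 + \<i>) / complex_of_real (sqrt 2)"

lemma gateG_diag: "gateG a a = 0"
  by (simp add: gateG_def pX_def pY_def)

lemma gateG_flip: "gateG a (\<not> a) = om * (if a then \<i> else 1)"
  by (cases a) (auto simp: gateG_def pX_def pY_def om_def field_simps)

lemma app_G:
  assumes "length xs = n"
  shows "app n (tensor n (\<lambda>_. gateG)) \<psi> xs = om ^ n * \<i> ^ wt n xs * \<psi> (map Not xs)"
proof -
  have "(\<Prod>k<n. gateG (xs!k) (\<not> xs!k)) = (\<Prod>k<n. om * (if xs!k then \<i> else 1))"
    by (simp add: gateG_flip)
  also have "\<dots> = om ^ n * \<i> ^ wt n xs"
    unfolding prod.distrib wt_def by (simp add: prod_if_pow)
  finally show ?thesis using app_tensor_flip[of gateG xs n \<psi>] gateG_diag assms by simp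
qed

lemma app_X:
  assumes "length xs = n"
  shows "app n (tensor n (\<lambda>_. pX)) \<psi> xs = \<psi> (map Not xs)"
  using app_tensor_flip[of pX xs n \<psi>] assms by (simp add: pX_def)

lemma cmod_om: "cmod om = 1"
proof -
  have "cmod (1 + \<i>) = sqrt 2" by (simp add: cmod_def)
  then show ?thesis by (simp add: om_def norm_divide)
qed


lemma sg_mult: "sg a * sg b = (if a \<noteq> b then -1 else 1)"
  by (auto simp: sg_def)

lemma logProj1_isdiag: "isdiag n (logProj1 n j)"
  unfolding logProj1_def by (intro mscale_isdiag madd_isdiag ident_isdiag logZ_isdiag)

lemma logProj1_diag:
  assumes "j < n - 1" "length xs = n"
  shows "logProj1 n j xs xs = (if xs!j \<noteq> xs!(n-1) then 1 else 0)"
  using assms by (simp add: logProj1_def mscale_def madd_def ident_diag logZ_diag sg_mult)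

lemma logCZ_isdiag: "isdiag n (logCZ n i j)"
  unfolding logCZ_def by (intro mscale_isdiag madd_isdiag ident_isdiag mmul_isdiag logProj1_isdiag)

lemma logCZ_diag:
  assumes "i < n - 1" "j < n - 1" "length xs = n"
  shows "logCZ n i j xs xs = (if xs!i \<noteq> xs!(n-1) \<and> xs!j \<noteq> xs!(n-1) then -1 else 1)"
  using assms by (simp add: logCZ_def mscale_def madd_def ident_diag mmul_diag_entry logProj1_isdiag logProj1_diag)

fun sgnC :: "nat \<Rightarrow> complex" where
  "sgnC 0 = 1"
| "sgnC (Suc m) = sgnC m * (-1) ^ m"

lemma Qlemma:
  "(\<Prod>i\<in>{1..<h}. \<Prod>j\<in>{Suc i..<h}. (if a i \<and> a j then -1 else (1::complex))) = sgnC (card {k\<in>{1..<h}. a k})"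
proof (induction h)
  case 0
  then show ?case by simp
next
  case (Suc h)
  show ?case
  proof (cases "h = 0")
    case True
    then show ?thesis by simp
  next
    case False
    let ?e = "\<lambda>i j. (if a i \<and> a j then -1 else (1::complex))"
    have s1: "{1..<Suc h} = insert h {1..<h}" using False by auto
    have "(\<Prod>i\<in>{1..<Suc h}. \<Prod>j\<in>{Suc i..<Suc h}. ?e i j)
        = (\<Prod>i\<in>{1..<h}. \<Prod>j\<in>{Suc i..<Suc h}. ?e i j)"
      unfolding s1 by simp
    also have "\<dots> = (\<Prod>i\<in>{1..<h}. ?e i h * (\<Prod>j\<in>{Suc i..<h}. ?e i j))"
    proof (rule prod.cong[OF refl])
      fix i assume "i \<in> {1..<h}"
      then have "{Suc i..<Suc h} = insert h {Suc i..<h}" by auto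
      then show "(\<Prod>j\<in>{Suc i..<Suc h}. ?e i j) = ?e i h * (\<Prod>j\<in>{Suc i..<h}. ?e i j)" by simp
    qed
    also have "\<dots> = (\<Prod>i\<in>{1..<h}. ?e i h) * sgnC (card {k\<in>{1..<h}. a k})"
      unfolding prod.distrib Suc.IH ..
    also have "(\<Prod>i\<in>{1..<h}. ?e i h) = (if a h then (-1) ^ card {k\<in>{1..<h}. a k} else 1)"
    proof (cases "a h")
      case True
      then show ?thesis by (simp add: prod_if_pow)
    next
      case False
      then show ?thesis by simp
    qed
    also have "card {k\<in>{1..<Suc h}. a k} = card {k\<in>{1..<h}. a k} + (if a h then 1 else 0)"
    proof (cases "a h")
      case True
      then have "{k\<in>{1..<Suc h}. a k} = insert h {k\<in>{1..<h}. a k}" using False by auto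
      then show ?thesis using True by simp
    next
      case F: False
      then have "{k\<in>{1..<Suc h}. a k} = {k\<in>{1..<h}. a k}" by (auto simp: less_Suc_eq)
      then show ?thesis using F by simp
    qed
    ultimately show ?thesis by (cases "a h") (simp_all add: mult.commute)
  qed
qed

lemma allLogCZ_props:
  assumes "length xs = n"
  shows "isdiag n (allLogCZ n) \<and> allLogCZ n xs xs =
     sgnC (card {k\<in>{1..<n-1}. xs!k \<noteq> xs!(n-1)})"
proof -
  define L where "L = concat (map (\<lambda>i. map (\<lambda>j. logCZ n i j) [Suc i..<n-1]) [1..<n-1])"
  have AL: "allLogCZ n = mprod_list n L" unfolding allLogCZ_def L_def by simp
  have D: "\<forall>A\<in>set L. isdiag n A" unfolding L_def by (auto simp: logCZ_isdiag)
  have "prod_list (map (\<lambda>A. A xs xs) L) =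
      (\<Prod>i\<in>{1..<n-1}. \<Prod>j\<in>{Suc i..<n-1}. logCZ n i j xs xs)"
    unfolding L_def map_concat prod_list_concat by (simp add: o_def prod_list_upt)
  also have "\<dots> = (\<Prod>i\<in>{1..<n-1}. \<Prod>j\<in>{Suc i..<n-1}.
        (if xs!i \<noteq> xs!(n-1) \<and> xs!j \<noteq> xs!(n-1) then -1 else (1::complex)))"
    by (intro prod.cong refl) (use assms in \<open>auto simp: logCZ_diag\<close>)
  also have "\<dots> = sgnC (card {k\<in>{1..<n-1}. xs!k \<noteq> xs!(n-1)})"
    by (rule Qlemma)
  finally show ?thesis using mprod_list_diag[OF D] assms AL by simp
qed

fun Pz :: "nat \<Rightarrow> nat \<Rightarrow> qop" where
  "Pz n 0 = ident n"
| "Pz n (Suc h) = mmul n (logZ n (Suc h)) (Pz n h)"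

lemma Pz_props:
  assumes "h \<le> n - 2"
  shows "Pz n h \<in> logical_paulis n \<and> isdiag n (Pz n h) \<and>
    (\<forall>xs. length xs = n \<longrightarrow> Pz n h xs xs = (\<Prod>k\<in>{1..h}. if xs!k \<noteq> xs!(n-1) then -1 else 1))"
  using assms
proof (induction h)
  case 0
  then show ?case by (simp add: logical_paulis.lp_id ident_isdiag ident_diag)
next
  case (Suc h)
  then have IH: "Pz n h \<in> logical_paulis n" "isdiag n (Pz n h)"
    "\<forall>xs. length xs = n \<longrightarrow> Pz n h xs xs = (\<Prod>k\<in>{1..h}. if xs!k \<noteq> xs!(n-1) then -1 else 1)"
    by auto
  have 1: "Pz n (Suc h) \<in> logical_paulis n"
    using logical_paulis.lp_Z[OF IH(1), of "Suc h"] Suc.prems by simp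
  have 2: "isdiag n (Pz n (Suc h))" using IH(2) by (simp add: mmul_isdiag logZ_isdiag)
  have 3: "Pz n (Suc h) xs xs = (\<Prod>k\<in>{1..Suc h}. if xs!k \<noteq> xs!(n-1) then -1 else 1)"
    if "length xs = n" for xs
  proof -
    have "Suc h < n - 1" using Suc.prems by simp
    then have "Pz n (Suc h) xs xs = (if xs!(Suc h) \<noteq> xs!(n-1) then -1 else 1) * Pz n h xs xs"
      using that by (simp add: mmul_diag_entry logZ_isdiag logZ_diag sg_mult)
    then show ?thesis using IH(3) that by (simp add: mult.commute)
  qed
  show ?case using 1 2 3 by blast
qed


lemma neg1_sq: "((-1::complex) ^ m) * (-1) ^ m = 1"
  by (simp add: power_mult_distrib[symmetric])

lemma ipow: "\<i> ^ (m + m mod 2) = (-1) ^ m * sgnC m"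
proof (induction m)
  case 0
  then show ?case by simp
next
  case (Suc m)
  have R: "(-1) ^ Suc m * sgnC (Suc m) = - sgnC m"
    using neg1_sq[of m] by (simp add: algebra_simps)
  show ?case
  proof (cases "even m")
    case True
    then have e: "Suc m + Suc m mod 2 = (m + m mod 2) + 2" by presburger
    have "(-1::complex) ^ m = 1" using True by simp
    have "\<i> ^ (Suc m + Suc m mod 2) = \<i> ^ (m + m mod 2) * \<i>^2" unfolding e by (rule power_add)
    also have "\<dots> = (-1)^m * sgnC m * \<i>^2" by (simp only: Suc.IH)
    also have "\<dots> = - sgnC m" using \<open>(-1::complex) ^ m = 1\<close> by simp
    finally show ?thesis using R by simp
  next
    case False
    then have e: "Suc m + Suc m mod 2 = (m + m mod 2)" by presburger
    have "(-1::complex) ^ m = -1" using False by simp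
    then show ?thesis unfolding R e Suc.IH by simp
  qed
qed

lemma counting:
  assumes len: "length xs = n" and ev: "even n" and n2: "n \<ge> 2" and ew: "even (wt n xs)"
  shows "(if n mod 4 = 0 then 1 else sg (xs!(n-1))) * \<i> ^ wt n xs
     = (-1) ^ card {k\<in>{1..<n-1}. xs!k \<noteq> xs!(n-1)} * sgnC (card {k\<in>{1..<n-1}. xs!k \<noteq> xs!(n-1)})"
proof -
  define b where "b = xs!(n-1)"
  define m where "m = card {k\<in>{1..<n-1}. xs!k \<noteq> b}"
  define M where "M = card {k\<in>{..<n-1}. xs!k \<noteq> b}"
  have Mm: "M = m + (if xs!0 \<noteq> b then 1 else 0)"
  proof (cases "xs!0 \<noteq> b")
    case True
    then have "{k\<in>{..<n-1}. xs!k \<noteq> b} = insert 0 {k\<in>{1..<n-1}. xs!k \<noteq> b}" using n2 by auto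
    moreover have "finite {k\<in>{1..<n-1}. xs!k \<noteq> b}"
      by (rule finite_subset[of _ "{1..<n-1}"]) auto
    moreover have "0 \<notin> {k\<in>{1..<n-1}. xs!k \<noteq> b}" by simp
    ultimately show ?thesis using True unfolding M_def m_def by (simp only: card_insert_disjoint) simp
  next
    case False
    have "{k\<in>{..<n-1}. xs!k \<noteq> b} = {k\<in>{1..<n-1}. xs!k \<noteq> b}"
    proof (rule set_eqI)
      fix k show "k \<in> {k\<in>{..<n-1}. xs!k \<noteq> b} \<longleftrightarrow> k \<in> {k\<in>{1..<n-1}. xs!k \<noteq> b}"
        using False by (cases "k = 0") auto
    qed
    then show ?thesis using False unfolding M_def m_def by simp
  qed
  have wM: "(\<not> b \<longrightarrow> wt n xs = M) \<and> (b \<longrightarrow> wt n xs + M = n)"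
  proof (cases b)
    case False
    have "{k\<in>{..<n}. xs!k} = {k\<in>{..<n-1}. xs!k \<noteq> b}"
    proof (rule set_eqI)
      fix k show "k \<in> {k\<in>{..<n}. xs!k} \<longleftrightarrow> k \<in> {k\<in>{..<n-1}. xs!k \<noteq> b}"
        using False b_def n2 by (cases "k = n-1") auto
    qed
    then show ?thesis using False unfolding wt_def M_def by simp
  next
    case True
    have "{k\<in>{..<n}. xs!k} = insert (n-1) {k\<in>{..<n-1}. xs!k}" using True b_def n2
      by auto
    then have w: "wt n xs = Suc (card {k\<in>{..<n-1}. xs!k})" unfolding wt_def by simp
    have "card {k\<in>{..<n-1}. xs!k} + card {k\<in>{..<n-1}. \<not> xs!k} = n - 1"
    proof -
      have "{k\<in>{..<n-1}. \<not> xs!k} = {..<n-1} - {k\<in>{..<n-1}. xs!k}" by auto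
      moreover have fS: "finite {k\<in>{..<n-1}. xs!k}" by (rule finite_subset[of _ "{..<n-1}"]) auto
      moreover have sS: "{k\<in>{..<n-1}. xs!k} \<subseteq> {..<n-1}" by auto
      ultimately have "card {k\<in>{..<n-1}. \<not> xs!k} = (n-1) - card {k\<in>{..<n-1}. xs!k}"
        using card_Diff_subset[OF fS sS] by simp
      moreover have "card {k\<in>{..<n-1}. xs!k} \<le> n - 1"
        by (metis (no_types, lifting) card_lessThan card_mono finite_lessThan mem_Collect_eq subsetI)
      ultimately show ?thesis by simp
    qed
    moreover have "M = card {k\<in>{..<n-1}. \<not> xs!k}" unfolding M_def using True by simp
    ultimately show ?thesis using True w n2 by simp
  qed
  have Mev: "even M" using wM ew ev by (cases b) (auto, presburger)
  then have Mm2: "M = m + m mod 2" using Mm by (cases "xs!0 \<noteq> b") (auto, presburger+)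
  have iM: "\<i> ^ M = (-1) ^ m * sgnC m" using Mm2 ipow by metis
  have iMM: "\<i> ^ M * \<i> ^ M = 1"
  proof -
    obtain q where "M = 2 * q" using Mev by blast
    then show ?thesis by (simp add: power_add[symmetric] power_mult)
  qed
  show ?thesis
  proof (cases b)
    case False
    then have "(if n mod 4 = 0 then 1 else sg (xs!(n-1))) = 1" using b_def by (simp add: sg_def)
    then show ?thesis using wM False iM unfolding m_def b_def by simp
  next
    case True
    define corr where "corr = (if n mod 4 = 0 then 1 else sg (xs!(n-1)))"
    have c1: "\<i> ^ n * corr = 1"
    proof -
      obtain q where q: "n = 2 * q" using ev by blast
      have "\<i> ^ n = (-1) ^ q" unfolding q by (simp add: power_mult)
      moreover have "n mod 4 = 0 \<longleftrightarrow> even q" unfolding q by presburger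
      ultimately show ?thesis using True b_def unfolding corr_def by (auto simp: sg_def)
    qed
    have w: "\<i> ^ wt n xs * \<i> ^ M = \<i> ^ n" using wM True by (simp add: power_add[symmetric])
    have "\<i> ^ wt n xs * corr = (\<i> ^ wt n xs * \<i> ^ M) * corr * \<i> ^ M"
      using iMM by (simp add: algebra_simps)
    also have "\<dots> = \<i> ^ M" using w c1 by (simp add: algebra_simps)
    finally show ?thesis using iM unfolding corr_def m_def b_def by (simp add: mult.commute)
  qed
qed


lemma app_mmul_diag:
  assumes "isdiag n A" "length xs = n"
  shows "app n (mmul n A B) \<psi> xs = A xs xs * app n B \<psi> xs"
  using assms by (simp add: app_def mmul_diag_entry sum_distrib_left mult.assoc)

definition mC :: "nat \<Rightarrow> bool list \<Rightarrow> nat" where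
  "mC n xs = card {k\<in>{1..<n-1}. xs!k \<noteq> xs!(n-1)}"

definition DD :: "nat \<Rightarrow> bool list \<Rightarrow> complex" where
  "DD n xs = (-1) ^ mC n xs * sgnC (mC n xs)"

lemma code_facts:
  assumes "\<psi> \<in> code_space n" "length xs = n"
  shows "\<psi> (map Not xs) = \<psi> xs" "odd (wt n xs) \<Longrightarrow> \<psi> xs = 0"
proof -
  have X: "app n (tensor n (\<lambda>_. pX)) \<psi> = \<psi>" and Z: "app n (tensor n (\<lambda>_. pZ)) \<psi> = \<psi>"
    using assms(1) by (auto simp: code_space_def)
  show "\<psi> (map Not xs) = \<psi> xs" using app_X[OF assms(2), of \<psi>] X by simp
  assume o: "odd (wt n xs)"
  have "app n (tensor n (\<lambda>_. pZ)) \<psi> xs = - \<psi> xs"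
    using app_diag[OF tensorZ_isdiag assms(2)] tensorZ_diag o by simp
  then show "\<psi> xs = 0" using Z by simp
qed

lemma V_formula:
  assumes ev: "even n" and n4: "n \<ge> 4" and c: "\<psi> \<in> code_space n" and len: "length xs = n"
  shows "app n (opV n) \<psi> xs = om ^ n * (DD n xs * \<psi> xs)"
proof -
  have G: "app n (tensor n (\<lambda>_. gateG)) \<psi> xs = om ^ n * \<i> ^ wt n xs * \<psi> xs"
    using app_G[OF len] code_facts(1)[OF c len] by simp
  have "app n (opV n) \<psi> xs = (if n mod 4 = 0 then 1 else sg (xs!(n-1))) * (om ^ n * \<i> ^ wt n xs * \<psi> xs)"
  proof (cases "n mod 4 = 0")
    case True
    then show ?thesis using G by (simp add: opV_def)
  next
    case False
    have "n - 1 < n" using n4 by simp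
    then show ?thesis using False G
      by (simp add: opV_def app_mmul_diag[OF onq_isdiag len] onq_diag)
  qed
  also have "\<dots> = om ^ n * (DD n xs * \<psi> xs)"
  proof (cases "even (wt n xs)")
    case True
    have "(if n mod 4 = 0 then 1 else sg (xs!(n-1))) * \<i> ^ wt n xs = DD n xs"
      using counting[OF len ev _ True] n4 unfolding DD_def mC_def by simp
    then show ?thesis by (simp add: algebra_simps)
  next
    case False
    then show ?thesis using code_facts(2)[OF c len] by simp
  qed
  finally show ?thesis .
qed

lemma R_formula:
  assumes n4: "n \<ge> 4" and len: "length xs = n"
  shows "app n (mmul n (Pz n (n-2)) (allLogCZ n)) \<psi> xs = DD n xs * \<psi> xs"
proof -
  have P: "isdiag n (Pz n (n-2))" "Pz n (n-2) xs xs = (\<Prod>k\<in>{1..n-2}. if xs!k \<noteq> xs!(n-1) then -1 else 1)"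
    using Pz_props[of "n-2" n] len by auto
  have s: "{1..n-2} = {1..<n-1}" using n4 by auto
  have P2: "Pz n (n-2) xs xs = (-1) ^ mC n xs"
    unfolding P(2) s mC_def by (rule prod_if_pow) simp
  have A: "isdiag n (allLogCZ n)" "allLogCZ n xs xs = sgnC (mC n xs)"
    using allLogCZ_props[OF len] unfolding mC_def by auto
  show ?thesis
    using app_mmul_diag[OF P(1) len] app_diag[OF A(1) len] P2 A(2)
    by (simp add: DD_def)
qed

lemma DD_flip: "length xs = n \<Longrightarrow> DD n (map Not xs) = DD n xs"
proof -
  assume len: "length xs = n"
  have "{k\<in>{1..<n-1}. map Not xs ! k \<noteq> map Not xs ! (n-1)} = {k\<in>{1..<n-1}. xs!k \<noteq> xs!(n-1)}"
  proof (rule set_eqI)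
    fix k
    show "k \<in> {k\<in>{1..<n-1}. map Not xs ! k \<noteq> map Not xs ! (n-1)} \<longleftrightarrow> k \<in> {k\<in>{1..<n-1}. xs!k \<noteq> xs!(n-1)}"
      using len by (cases "k < n - 1") auto
  qed
  then show ?thesis by (simp add: DD_def mC_def)
qed

theorem mainTheorem4:
  fixes n :: nat
  assumes "even n" and "n \<ge> 4"
  shows "(\<forall>\<psi>\<in>code_space n. app n (opV n) \<psi> \<in> code_space n)
       \<and> (\<exists>c P. cmod c = 1 \<and> P \<in> logical_paulis n \<and>
            (\<forall>\<psi>\<in>code_space n.
               app n (opV n) \<psi> = (\<lambda>xs. c * app n (mmul n P (allLogCZ n)) \<psi> xs)))"
proof (intro conjI)
  show "\<forall>\<psi>\<in>code_space n. app n (opV n) \<psi> \<in> code_space n"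
  proof
    fix \<psi> assume c: "\<psi> \<in> code_space n"
    define \<phi> where "\<phi> = app n (opV n) \<psi>"
    have off: "\<forall>xs. length xs \<noteq> n \<longrightarrow> \<phi> xs = 0" by (simp add: \<phi>_def app_def)
    have F: "\<And>xs. length xs = n \<Longrightarrow> \<phi> xs = om ^ n * (DD n xs * \<psi> xs)"
      unfolding \<phi>_def using V_formula[OF assms c] by simp
    have X: "app n (tensor n (\<lambda>_. pX)) \<phi> = \<phi>"
    proof
      fix xs
      show "app n (tensor n (\<lambda>_. pX)) \<phi> xs = \<phi> xs"
      proof (cases "length xs = n")
        case True
        then show ?thesis using app_X[OF True, of \<phi>] F[OF True] F[of "map Not xs"]
            DD_flip[OF True] code_facts(1)[OF c True] by simp
      next
        case False
        then show ?thesis using off by (simp add: app_def)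
      qed
    qed
    have Z: "app n (tensor n (\<lambda>_. pZ)) \<phi> = \<phi>"
    proof
      fix xs
      show "app n (tensor n (\<lambda>_. pZ)) \<phi> xs = \<phi> xs"
      proof (cases "length xs = n")
        case True
        have e: "app n (tensor n (\<lambda>_. pZ)) \<phi> xs = (-1) ^ wt n xs * \<phi> xs"
          using app_diag[OF tensorZ_isdiag True] tensorZ_diag by simp
        show ?thesis
        proof (cases "even (wt n xs)")
          case True
          then show ?thesis using e by simp
        next
          case False
          then show ?thesis using e F[OF \<open>length xs = n\<close>] code_facts(2)[OF c \<open>length xs = n\<close>] by simp
        qed
      next
        case False
        then show ?thesis using off by (simp add: app_def)
      qed
    qed
    show "\<phi> \<in> code_space n" using off X Z by (simp add: code_space_def)
  qed
next
  show "\<exists>c P. cmod c = 1 \<and> P \<in> logical_paulis n \<and>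
            (\<forall>\<psi>\<in>code_space n.
               app n (opV n) \<psi> = (\<lambda>xs. c * app n (mmul n P (allLogCZ n)) \<psi> xs))"
  proof (intro exI conjI ballI)
    show "cmod (om ^ n) = 1" by (simp add: norm_power cmod_om)
    show "Pz n (n-2) \<in> logical_paulis n" using Pz_props[of "n-2" n] by simp
    fix \<psi> assume c: "\<psi> \<in> code_space n"
    show "app n (opV n) \<psi> = (\<lambda>xs. om ^ n * app n (mmul n (Pz n (n-2)) (allLogCZ n)) \<psi> xs)"
    proof
      fix xs
      show "app n (opV n) \<psi> xs = om ^ n * app n (mmul n (Pz n (n-2)) (allLogCZ n)) \<psi> xs"
      proof (cases "length xs = n")
        case True
        then show ?thesis using V_formula[OF assms c True] R_formula[OF assms(2) True] by simp
      next
        case False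
        then show ?thesis by (simp add: app_def)
      qed
    qed
  qed
qed

end
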